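(* Let $k\ge 1$, $n\ge 2$ and $\mathbf C=(c_0,\dots,c_k)\in\{0,1\}^{k+1}$. Let $\mathbf H_n=(h_0,\dots,h_k)$ with $h_\beta=\binom{k}{\beta}\sum_{j=1}^{n-1}\frac{1}{j^\beta}$, and $\mathbf H_n\mathbf C^T=\sum_{\beta=0}^k h_\beta c_\beta$. For $1\le m\le n$ define $$O_{\mathbf C\max}(n,m+c_k-1)=\frac{(n-1)!^k}{(m-1)!}\,(\mathbf H_n\mathbf C^T)^{m-1}\prod_{i=1}^{n-m}F_{i+1}(\mathbf C').$$ Then $O_{\mathbf C\max}(n,m+c_k-1)\ge O_{\mathbf C}(n,m+c_k-1)$ for all $1\le m\le n$.
   Context: Fix integers $k\ge 1$, $n\ge 1$ and $\mathbf C=(c_0,c_1,\dots,c_k)\in\{0,1\}^{k+1}$; put $\mathbf C'=(1,\dots,1)-\mathbf C$. Consider $k$-tuples $(\pi_1,\dots,\pi_k)$ of permutations of $\{1,\dots,n\}$. A position $\alpha$ is a record of a permutation $\pi$ if $\pi(\alpha)<\pi(\alpha')$ for every $\alpha'<\alpha$ (position $1$ is always a record); equivalently records index the minimal elements of the points $(\alpha,\pi(\alpha))$ under strict componentwise domination. For a tuple, let $l_\alpha$ be the number of $\beta\in\{1,\dots,k\}$ for which $\alpha$ is a record of $\pi_\beta$ (so $l_1=k$). The $\mathbf C$ sequential optimization set of the tuple is $S=\{\alpha:c_{l_\alpha}=1\}$, with weight $|S|$. For an integer $m$, $O_{\mathbf C}(n,m)$ is the number of $k$-tuples whose weight equals $m$.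 For $j\ge 2$ and $X=(x_0,\dots,x_k)\in\mathbb R^{k+1}$, $F_j(X)=\sum_{\beta=0}^k\binom{k}{\beta}\frac{x_\beta}{(j-1)^\beta}$. Empty products equal $1$. *)

theory Defs
  imports Complex_Main "HOL-Combinatorics.Permutations"
begin

definition is_record :: "(nat \<Rightarrow> nat) \<Rightarrow> nat \<Rightarrow> bool" where
  "is_record p a \<longleftrightarrow> (\<forall>a'. 1 \<le> a' \<and> a' < a \<longrightarrow> p a < p a')"

definition perm_tuples :: "nat \<Rightarrow> nat \<Rightarrow> (nat \<Rightarrow> nat) list set" where
  "perm_tuples k n = {ps. length ps = k \<and> (\<forall>p\<in>set ps. p permutes {1..n})}"

definition rec_count :: "(nat \<Rightarrow> nat) list \<Rightarrow> nat \<Rightarrow> nat" where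
  "rec_count ps a = length (filter (\<lambda>p. is_record p a) ps)"

definition seq_opt_set :: "(nat \<Rightarrow> nat) \<Rightarrow> nat \<Rightarrow> (nat \<Rightarrow> nat) list \<Rightarrow> nat set" where
  "seq_opt_set c n ps = {a \<in> {1..n}. c (rec_count ps a) = 1}"

definition O_C :: "nat \<Rightarrow> (nat \<Rightarrow> nat) \<Rightarrow> nat \<Rightarrow> nat \<Rightarrow> nat" where
  "O_C k c n m = card {ps \<in> perm_tuples k n. card (seq_opt_set c n ps) = m}"

definition F :: "nat \<Rightarrow> nat \<Rightarrow> (nat \<Rightarrow> real) \<Rightarrow> real" where
  "F k j X = (\<Sum>\<beta>\<le>k. real (k choose \<beta>) * X \<beta> / (real j - 1) ^ \<beta>)"

definition HC :: "nat \<Rightarrow> (nat \<Rightarrow> nat) \<Rightarrow> nat \<Rightarrow> real" where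
  "HC k c n = (\<Sum>\<beta>\<le>k. real (k choose \<beta>) * (\<Sum>j=1..n-1. 1 / real j ^ \<beta>) * real (c \<beta>))"

definition O_C_max :: "nat \<Rightarrow> (nat \<Rightarrow> nat) \<Rightarrow> nat \<Rightarrow> nat \<Rightarrow> real" where
  "O_C_max k c n m = fact (n - 1) ^ k / fact (m - 1) * HC k c n ^ (m - 1)
      * (\<Prod>i=1..n-m. F k (i + 1) (\<lambda>\<beta>. 1 - real (c \<beta>)))"

end

theory Submission
  imports Defs
begin

definition BB :: "nat \<Rightarrow> nat set \<Rightarrow> (nat \<Rightarrow> nat) set" where
  "BB n V = {p. bij_betw p {1..n} V \<and> (\<forall>x. x \<notin> {1..n} \<longrightarrow> p x = x)}"

lemma set_Cons_image: "set_Cons A XS = (\<lambda>(x,xs). x # xs) ` (A \<times> XS)"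
  by (auto simp: set_Cons_def)

lemma sum_set_Cons: "(\<Sum>z\<in>set_Cons A XS. h z) = (\<Sum>x\<in>A. \<Sum>xs\<in>XS. h (x # xs))"
proof -
  have inj: "inj_on (\<lambda>(x,xs). x # xs) (A \<times> XS)" by (auto simp: inj_on_def)
  have "(\<Sum>z\<in>set_Cons A XS. h z) = (\<Sum>z\<in>A \<times> XS. h ((\<lambda>(x,xs). x # xs) z))"
    unfolding set_Cons_image by (rule sum.reindex[OF inj, unfolded comp_def])
  also have "\<dots> = (\<Sum>x\<in>A. \<Sum>xs\<in>XS. h (x # xs))"
    by (simp add: sum.cartesian_product split_def)
  finally show ?thesis .
qed

lemma finite_set_Cons: "finite A \<Longrightarrow> finite XS \<Longrightarrow> finite (set_Cons A XS)"
  unfolding set_Cons_image by auto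

lemma finite_listset: "(\<forall>A\<in>set As. finite A) \<Longrightarrow> finite (listset As)"
  by (induction As) (auto intro: finite_set_Cons)

lemma listset_iff: "vs \<in> listset Vs \<longleftrightarrow> list_all2 (\<in>) vs Vs"
proof (induction Vs arbitrary: vs)
  case Nil then show ?case by auto
next
  case (Cons V Vs) then show ?case
    by (cases vs) (auto simp: set_Cons_def)
qed

lemma listset_sing: "listset (map (\<lambda>V. {f V}) Vs) = {map f Vs}"
  by (induction Vs) (auto simp: set_Cons_def)

lemma BB_bij:
  "bij_betw (\<lambda>(v,p'). p'(Suc n := v)) (Sigma V (\<lambda>v. BB n (V - {v}))) (BB (Suc n) V)"
proof (rule bij_betw_byWitness[where f'="\<lambda>p. (p (Suc n), p(Suc n := Suc n))"])
  show "\<forall>a\<in>Sigma V (\<lambda>v. BB n (V - {v})). (\<lambda>p. (p (Suc n), p(Suc n := Suc n))) ((\<lambda>(v, p'). p'(Suc n := v)) a) = a"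
    by (auto simp: BB_def)
  show "\<forall>a'\<in>BB (Suc n) V. (\<lambda>(v, p'). p'(Suc n := v)) ((\<lambda>p. (p (Suc n), p(Suc n := Suc n))) a') = a'"
    by auto
  show "(\<lambda>(v, p'). p'(Suc n := v)) ` Sigma V (\<lambda>v. BB n (V - {v})) \<subseteq> BB (Suc n) V"
  proof safe
    fix v p' assume v: "v \<in> V" and p': "p' \<in> BB n (V - {v})"
    have b: "bij_betw p' {1..n} (V - {v})" and o: "\<forall>x. x \<notin> {1..n} \<longrightarrow> p' x = x"
      using p' by (auto simp: BB_def)
    have e: "{1..Suc n} = insert (Suc n) {1..n}" by auto
    have b2: "bij_betw (p'(Suc n := v)) {1..n} (V - {v})"
      using b by (rule bij_betw_cong[THEN iffD1, rotated]) auto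
    have "bij_betw (p'(Suc n := v)) ({1..n} \<union> {Suc n}) ((V - {v}) \<union> {(p'(Suc n := v)) (Suc n)})"
      by (rule notIn_Un_bij_betw[OF _ _ b2]) auto
    then have "bij_betw (p'(Suc n := v)) (insert (Suc n) {1..n}) (insert v (V - {v}))" by simp
    moreover have "insert v (V - {v}) = V" using v by auto
    ultimately have bb: "bij_betw (p'(Suc n := v)) {1..Suc n} V" by (simp only: e)
    show "p'(Suc n := v) \<in> BB (Suc n) V"
      using o bb by (auto simp: BB_def)
  qed
  show "(\<lambda>p. (p (Suc n), p(Suc n := Suc n))) ` BB (Suc n) V \<subseteq> Sigma V (\<lambda>v. BB n (V - {v}))"
  proof safe
    fix p assume p: "p \<in> BB (Suc n) V"
    have b: "bij_betw p {1..Suc n} V" and o: "\<forall>x. x \<notin> {1..Suc n} \<longrightarrow> p x = x"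
      using p by (auto simp: BB_def)
    have "Suc n \<in> {1..Suc n}" by simp
    then show pv: "p (Suc n) \<in> V" using b by (meson bij_betwE)
    have e: "{1..n} = {1..Suc n} - {Suc n}" by auto
    have "bij_betw p {1..n} (V - {p (Suc n)})"
      unfolding e by (rule bij_betw_DiffI[OF b]) (use pv in auto)
    then have "bij_betw (p(Suc n := Suc n)) {1..n} (V - {p (Suc n)})"
      by (rule bij_betw_cong[THEN iffD1, rotated]) auto
    then show "p(Suc n := Suc n) \<in> BB n (V - {p (Suc n)})"
      using o by (auto simp: BB_def)
  qed
qed


lemma BB_0: "BB 0 {} = {id}"
  by (auto simp: BB_def bij_betw_def)

lemma finite_BB: "finite V \<Longrightarrow> card V = n \<Longrightarrow> finite (BB n V)"
proof (induction n arbitrary: V)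
  case 0 then show ?case using BB_0 by simp
next
  case (Suc n)
  have "BB (Suc n) V = (\<lambda>(v,p'). p'(Suc n := v)) ` (Sigma V (\<lambda>v. BB n (V - {v})))"
    using BB_bij[of n V] by (simp add: bij_betw_def)
  moreover have "finite (Sigma V (\<lambda>v. BB n (V - {v})))"
    using Suc by (intro finite_SigmaI) auto
  ultimately show ?case by simp
qed

lemma sum_BB_Suc:
  assumes "finite V" "card V = Suc n"
  shows "(\<Sum>p\<in>BB (Suc n) V. h p) = (\<Sum>v\<in>V. \<Sum>p'\<in>BB n (V - {v}). h (p'(Suc n := v)))"
proof -
  have "(\<Sum>p\<in>BB (Suc n) V. h p) = (\<Sum>x\<in>Sigma V (\<lambda>v. BB n (V - {v})). h ((\<lambda>(v,p'). p'(Suc n := v)) x))"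
    using sum.reindex_bij_betw[OF BB_bij[of n V], of h] by simp
  also have "\<dots> = (\<Sum>v\<in>V. \<Sum>p'\<in>BB n (V - {v}). h (p'(Suc n := v)))"
    using assms by (subst sum.Sigma) (auto intro!: finite_BB simp: split_def)
  finally show ?thesis .
qed

definition glue :: "nat \<Rightarrow> (nat \<Rightarrow> nat) list \<Rightarrow> nat list \<Rightarrow> (nat \<Rightarrow> nat) list" where
  "glue n ps vs = map2 (\<lambda>p v. p(Suc n := v)) ps vs"

definition rem :: "nat set list \<Rightarrow> nat list \<Rightarrow> nat set list" where
  "rem Vs vs = map2 (\<lambda>V v. V - {v}) Vs vs"

lemma glue_Cons[simp]: "glue n (p#ps) (v#vs) = p(Suc n := v) # glue n ps vs"
  by (simp add: glue_def)
lemma glue_Nil[simp]: "glue n [] [] = []"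
  by (simp add: glue_def)
lemma rem_Cons[simp]: "rem (V#Vs) (v#vs) = (V - {v}) # rem Vs vs"
  by (simp add: rem_def)
lemma rem_Nil[simp]: "rem [] [] = []"
  by (simp add: rem_def)

lemma sum_listset_Suc:
  assumes "\<forall>V\<in>set Vs. finite V \<and> card V = Suc n"
  shows "(\<Sum>ps\<in>listset (map (BB (Suc n)) Vs). h ps)
     = (\<Sum>vs\<in>listset Vs. \<Sum>ps'\<in>listset (map (BB n) (rem Vs vs)). h (glue n ps' vs))"
  using assms
proof (induction Vs arbitrary: h)
  case Nil then show ?case by simp
next
  case (Cons V Vs)
  have "(\<Sum>ps\<in>listset (map (BB (Suc n)) (V # Vs)). h ps)
      = (\<Sum>p\<in>BB (Suc n) V. \<Sum>ps\<in>listset (map (BB (Suc n)) Vs). h (p # ps))"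
    by (simp add: sum_set_Cons)
  also have "\<dots> = (\<Sum>p\<in>BB (Suc n) V. \<Sum>vs\<in>listset Vs. \<Sum>ps'\<in>listset (map (BB n) (rem Vs vs)). h (p # glue n ps' vs))"
    using Cons by simp
  also have "\<dots> = (\<Sum>v\<in>V. \<Sum>p'\<in>BB n (V - {v}). \<Sum>vs\<in>listset Vs. \<Sum>ps'\<in>listset (map (BB n) (rem Vs vs)). h (p'(Suc n := v) # glue n ps' vs))"
    using Cons.prems by (subst sum_BB_Suc) auto
  also have "\<dots> = (\<Sum>v\<in>V. \<Sum>vs\<in>listset Vs. \<Sum>p'\<in>BB n (V - {v}). \<Sum>ps'\<in>listset (map (BB n) (rem Vs vs)). h (p'(Suc n := v) # glue n ps' vs))"
    by (rule sum.cong[OF refl], rule sum.swap)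
  also have "\<dots> = (\<Sum>vs\<in>listset (V # Vs). \<Sum>ps'\<in>listset (map (BB n) (rem (V # Vs) vs)). h (glue n ps' vs))"
    by (simp add: sum_set_Cons)
  finally show ?case .
qed

fun cnt :: "nat set list \<Rightarrow> nat list \<Rightarrow> nat" where
  "cnt (V#Vs) (v#vs) = (if v = Min V then 1 else 0) + cnt Vs vs"
| "cnt _ _ = 0"

lemma is_record_upd_le: "a \<le> n \<Longrightarrow> is_record (p(Suc n := v)) a = is_record p a"
  by (auto simp: is_record_def)

lemma rec_count_glue_le: "a \<le> n \<Longrightarrow> length ps = length vs \<Longrightarrow> rec_count (glue n ps vs) a = rec_count ps a"
proof (induction ps arbitrary: vs)
  case Nil then show ?case by (simp add: glue_def rec_count_def)
next
  case (Cons p ps) then show ?case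
    by (cases vs) (auto simp: rec_count_def is_record_upd_le)
qed

lemma is_record_top:
  assumes "v \<in> V" "finite V" "p' \<in> BB n (V - {v})"
  shows "is_record (p'(Suc n := v)) (Suc n) \<longleftrightarrow> v = Min V"
proof -
  have im: "p' ` {1..n} = V - {v}" using assms(3) by (auto simp: BB_def bij_betw_def)
  have "is_record (p'(Suc n := v)) (Suc n) \<longleftrightarrow> (\<forall>y\<in>V - {v}. v < y)"
    unfolding is_record_def im[symmetric] by auto
  also have "\<dots> \<longleftrightarrow> v = Min V"
  proof
    assume h: "\<forall>y\<in>V - {v}. v < y"
    have "Min V \<in> V" using assms by (intro Min_in) auto
    moreover have "Min V \<le> v" using assms by auto
    ultimately show "v = Min V" using h by (metis Diff_iff empty_iff insert_iff leD)
  next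
    assume "v = Min V" then show "\<forall>y\<in>V - {v}. v < y"
      using assms by (metis DiffE Min_le insertCI nless_le)
  qed
  finally show ?thesis .
qed

lemma rec_count_glue_top:
  "list_all2 (\<in>) vs Vs \<Longrightarrow> list_all2 (\<in>) ps (map (BB n) (rem Vs vs)) \<Longrightarrow> \<forall>V\<in>set Vs. finite V
   \<Longrightarrow> rec_count (glue n ps vs) (Suc n) = cnt Vs vs"
proof (induction Vs arbitrary: vs ps)
  case Nil then show ?case by (simp add: rec_count_def)
next
  case (Cons V Vs)
  then obtain v vs' where vs: "vs = v # vs'" by (cases vs) auto
  with Cons obtain p ps' where ps: "ps = p # ps'" by (cases ps) auto
  have IH: "rec_count (glue n ps' vs') (Suc n) = cnt Vs vs'"
    using Cons vs ps by auto
  have "is_record (p(Suc n := v)) (Suc n) \<longleftrightarrow> v = Min V"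
    using Cons.prems vs ps by (intro is_record_top) auto
  then show ?case using IH vs ps by (simp add: rec_count_def)
qed

lemma seq_opt_glue:
  assumes "list_all2 (\<in>) vs Vs" "list_all2 (\<in>) ps (map (BB n) (rem Vs vs))" "\<forall>V\<in>set Vs. finite V"
  shows "card (seq_opt_set c (Suc n) (glue n ps vs)) = card (seq_opt_set c n ps) + (if c (cnt Vs vs) = 1 then 1 else 0)"
proof -
  have len: "length ps = length vs" using assms by (auto simp: list_all2_lengthD rem_def)
  have "seq_opt_set c (Suc n) (glue n ps vs) = seq_opt_set c n ps \<union> (if c (cnt Vs vs) = 1 then {Suc n} else {})"
    using rec_count_glue_le[OF _ len] rec_count_glue_top[OF assms]
    by (auto simp: seq_opt_set_def le_Suc_eq)
  moreover have "Suc n \<notin> seq_opt_set c n ps" by (simp add: seq_opt_set_def)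
  moreover have "finite (seq_opt_set c n ps)" by (simp add: seq_opt_set_def)
  ultimately show ?thesis by auto
qed


fun Q :: "nat \<Rightarrow> (nat \<Rightarrow> nat) \<Rightarrow> nat \<Rightarrow> nat \<Rightarrow> nat" where
  "Q k c 0 m = (if m = 0 then 1 else 0)"
| "Q k c (Suc n) m = (\<Sum>b\<le>k. (k choose b) * n ^ (k - b) *
      (if c b = 1 then (case m of 0 \<Rightarrow> 0 | Suc m' \<Rightarrow> Q k c n m') else Q k c n m))"

lemma pascal_sum:
  fixes f :: "nat \<Rightarrow> nat"
  shows "(\<Sum>b\<le>Suc k. (Suc k choose b) * f b) = (\<Sum>b\<le>k. (k choose b) * f (Suc b)) + (\<Sum>b\<le>k. (k choose b) * f b)"
proof -
  have 1: "(\<Sum>b\<le>Suc k. (Suc k choose b) * f b) = f 0 + (\<Sum>b\<le>k. (Suc k choose Suc b) * f (Suc b))"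
    by (subst sum.atMost_Suc_shift) simp
  have 2: "(\<Sum>b\<le>k. (Suc k choose Suc b) * f (Suc b)) = (\<Sum>b\<le>k. (k choose b) * f (Suc b)) + (\<Sum>b\<le>k. (k choose Suc b) * f (Suc b))"
    by (simp add: sum.distrib algebra_simps)
  have 3: "f 0 + (\<Sum>b\<le>k. (k choose Suc b) * f (Suc b)) = (\<Sum>b\<le>Suc k. (k choose b) * f b)"
    by (subst sum.atMost_Suc_shift) simp
  have 4: "(\<Sum>b\<le>Suc k. (k choose b) * f b) = (\<Sum>b\<le>k. (k choose b) * f b)"
    by simp
  show ?thesis using 1 2 3 4 by simp
qed

lemma choices_sum:
  assumes "\<forall>V\<in>set Vs. finite V \<and> card V = Suc n"
  shows "(\<Sum>vs\<in>listset Vs. G (cnt Vs vs)) = (\<Sum>b\<le>length Vs. (length Vs choose b) * n ^ (length Vs - b) * G b)"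
  using assms
proof (induction Vs arbitrary: G)
  case Nil then show ?case by simp
next
  case (Cons V Vs)
  let ?k = "length Vs"
  have fin: "finite V" and cV: "card V = Suc n" using Cons.prems by auto
  have mV: "Min V \<in> V" using fin cV by (intro Min_in) auto
  have "(\<Sum>vs\<in>listset (V # Vs). G (cnt (V # Vs) vs))
     = (\<Sum>v\<in>V. \<Sum>vs\<in>listset Vs. G ((if v = Min V then 1 else 0) + cnt Vs vs))"
    by (simp add: sum_set_Cons)
  also have "\<dots> = (\<Sum>vs\<in>listset Vs. G (Suc (cnt Vs vs))) + (\<Sum>v\<in>V - {Min V}. \<Sum>vs\<in>listset Vs. G (cnt Vs vs))"
  proof -
    have "(\<Sum>v\<in>V. \<Sum>vs\<in>listset Vs. G ((if v = Min V then 1 else 0) + cnt Vs vs))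
      = (\<Sum>vs\<in>listset Vs. G ((if Min V = Min V then 1 else 0) + cnt Vs vs)) + (\<Sum>v\<in>V - {Min V}. \<Sum>vs\<in>listset Vs. G ((if v = Min V then 1 else 0) + cnt Vs vs))"
      by (rule sum.remove[OF fin mV])
    also have "(\<Sum>v\<in>V - {Min V}. \<Sum>vs\<in>listset Vs. G ((if v = Min V then 1 else 0) + cnt Vs vs))
       = (\<Sum>v\<in>V - {Min V}. \<Sum>vs\<in>listset Vs. G (cnt Vs vs))"
      by (rule sum.cong) auto
    finally show ?thesis by simp
  qed
  also have "\<dots> = (\<Sum>vs\<in>listset Vs. G (Suc (cnt Vs vs))) + n * (\<Sum>vs\<in>listset Vs. G (cnt Vs vs))"
    using fin cV mV by simp
  also have "\<dots> = (\<Sum>b\<le>?k. (?k choose b) * n ^ (?k - b) * G (Suc b)) + n * (\<Sum>b\<le>?k. (?k choose b) * n ^ (?k - b) * G b)"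
    using Cons.IH[of "\<lambda>x. G (Suc x)"] Cons.IH[of G] Cons.prems by simp
  also have "\<dots> = (\<Sum>b\<le>?k. (?k choose b) * (n ^ (Suc ?k - Suc b) * G (Suc b))) + (\<Sum>b\<le>?k. (?k choose b) * (n ^ (Suc ?k - b) * G b))"
    by (simp add: sum_distrib_left Suc_diff_le algebra_simps)
  also have "\<dots> = (\<Sum>b\<le>Suc ?k. (Suc ?k choose b) * (n ^ (Suc ?k - b) * G b))"
    by (rule pascal_sum[symmetric])
  finally show ?case by (simp add: algebra_simps)
qed

lemma rem_props:
  "list_all2 (\<in>) vs Vs \<Longrightarrow> \<forall>V\<in>set Vs. finite V \<and> card V = Suc n \<Longrightarrow>
   (\<forall>V\<in>set (rem Vs vs). finite V \<and> card V = n) \<and> length (rem Vs vs) = length Vs"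
proof (induction Vs arbitrary: vs)
  case Nil then show ?case by simp
next
  case (Cons V Vs) then show ?case by (cases vs) auto
qed

lemma card_filter_sum: "finite A \<Longrightarrow> card {x\<in>A. P x} = (\<Sum>x\<in>A. if P x then 1 else 0 :: nat)"
  by (simp add: sum.If_cases Int_def)

lemma count_main:
  assumes "\<forall>V\<in>set Vs. finite V \<and> card V = n" "length Vs = k"
  shows "(\<Sum>ps\<in>listset (map (BB n) Vs). if card (seq_opt_set c n ps) = m then 1 else 0) = Q k c n m"
  using assms
proof (induction n arbitrary: Vs m)
  case 0
  have mp: "map (BB 0) Vs = map (\<lambda>V. {id}) Vs" using 0 BB_0 by (auto intro!: map_cong)
  have "listset (map (BB 0) Vs) = {map (\<lambda>V. id) Vs}" unfolding mp using listset_sing[of "\<lambda>V. id" Vs] by simp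
  then show ?case by (simp add: seq_opt_set_def)
next
  case (Suc n)
  let ?G = "\<lambda>b. (if c b = 1 then (case m of 0 \<Rightarrow> 0 | Suc m' \<Rightarrow> Q k c n m') else Q k c n m)"
  have "(\<Sum>ps\<in>listset (map (BB (Suc n)) Vs). if card (seq_opt_set c (Suc n) ps) = m then 1 else 0)
     = (\<Sum>vs\<in>listset Vs. \<Sum>ps'\<in>listset (map (BB n) (rem Vs vs)).
          if card (seq_opt_set c (Suc n) (glue n ps' vs)) = m then 1 else 0)"
    using Suc.prems(1) by (rule sum_listset_Suc)
  also have "\<dots> = (\<Sum>vs\<in>listset Vs. ?G (cnt Vs vs))"
  proof (rule sum.cong[OF refl])
    fix vs assume vs: "vs \<in> listset Vs"
    have la: "list_all2 (\<in>) vs Vs" using vs listset_iff by blast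
    have rp: "\<forall>V\<in>set (rem Vs vs). finite V \<and> card V = n" "length (rem Vs vs) = k"
      using rem_props[OF la] Suc.prems by auto
    have "(\<Sum>ps'\<in>listset (map (BB n) (rem Vs vs)). if card (seq_opt_set c (Suc n) (glue n ps' vs)) = m then 1 else 0)
       = (\<Sum>ps'\<in>listset (map (BB n) (rem Vs vs)). if card (seq_opt_set c n ps') + (if c (cnt Vs vs) = 1 then 1 else 0) = m then 1 else 0)"
      apply (rule sum.cong[OF refl])
      apply (subst seq_opt_glue[OF la])
      using listset_iff Suc.prems by auto
    also have "\<dots> = ?G (cnt Vs vs)"
    proof (cases "c (cnt Vs vs) = 1")
      case True
      show ?thesis
      proof (cases m)
        case 0 then show ?thesis using True by simp
      next
        case (Suc m') then show ?thesis using True Suc.IH[OF rp, of m'] by simp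
      qed
    next
      case False then show ?thesis using Suc.IH[OF rp, of m] by simp
    qed
    finally show "(\<Sum>ps'\<in>listset (map (BB n) (rem Vs vs)). if card (seq_opt_set c (Suc n) (glue n ps' vs)) = m then 1 else 0) = ?G (cnt Vs vs)" .
  qed
  also have "\<dots> = (\<Sum>b\<le>k. (k choose b) * n ^ (k - b) * ?G b)"
    using choices_sum[of Vs n ?G] Suc.prems by simp
  finally show ?case by simp
qed

lemma BB_perm: "BB n {1..n} = {p. p permutes {1..n}}"
  by (auto simp: BB_def permutes_imp_bij permutes_not_in intro: bij_imp_permutes)

lemma listset_replicate: "listset (replicate k A) = {ps. length ps = k \<and> (\<forall>p\<in>set ps. p \<in> A)}"
proof (induction k)
  case 0 then show ?case by auto
next
  case (Suc k) then show ?case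
    by (auto simp: set_Cons_def length_Suc_conv)
qed

lemma O_C_Q:
  assumes "k \<ge> 1" 
  shows "O_C k c n m = Q k c n m"
proof -
  have pt: "perm_tuples k n = listset (map (BB n) (replicate k {1..n}))"
    by (simp only: perm_tuples_def listset_replicate map_replicate BB_perm mem_Collect_eq)
  have fin: "finite (perm_tuples k n)" unfolding pt
    by (rule finite_listset) (auto intro: finite_BB)
  have "O_C k c n m = (\<Sum>ps\<in>perm_tuples k n. if card (seq_opt_set c n ps) = m then 1 else 0)"
    unfolding O_C_def by (rule card_filter_sum[OF fin])
  also have "\<dots> = Q k c n m" unfolding pt
    by (rule count_main) auto
  finally show ?thesis .
qed


definition al :: "nat \<Rightarrow> (nat \<Rightarrow> nat) \<Rightarrow> nat \<Rightarrow> real" where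
  "al k c j = F k (j + 1) (\<lambda>b. 1 - real (c b))"

definition be :: "nat \<Rightarrow> (nat \<Rightarrow> nat) \<Rightarrow> nat \<Rightarrow> real" where
  "be k c j = (\<Sum>b\<le>k. real (k choose b) * (1 / real j ^ b) * real (c b))"

fun r :: "nat \<Rightarrow> (nat \<Rightarrow> nat) \<Rightarrow> nat \<Rightarrow> nat \<Rightarrow> real" where
  "r k c 0 t = (if t = 0 then 1 else 0)"
| "r k c (Suc N) t = al k c (Suc N) * r k c N t + be k c (Suc N) * (case t of 0 \<Rightarrow> 0 | Suc t' \<Rightarrow> r k c N t')"

lemma sum_zero_pow:
  fixes X :: "nat \<Rightarrow> nat"
  shows "(\<Sum>b\<le>k. (k choose b) * 0 ^ (k - b) * X b) = X k"
proof -
  have "(\<Sum>b\<le>k. (k choose b) * 0 ^ (k - b) * X b) = (\<Sum>b\<le>k. if b = k then X b else 0)"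
    by (rule sum.cong) auto
  also have "\<dots> = X k" by simp
  finally show ?thesis .
qed

lemma Q_one:
  assumes "c k \<in> {0, 1}"
  shows "Q k c (Suc 0) (t + c k) = (if t = 0 then 1 else 0)"
  using assms by (auto simp: sum_zero_pow split: nat.split)

lemma Q_zero:
  assumes "c k = 1"
  shows "Q k c (Suc j) 0 = 0"
proof (induction j)
  case 0 show ?case using assms by (simp add: sum_zero_pow)
next
  case (Suc j) then show ?case by simp
qed

lemma Q_r:
  assumes c01: "\<forall>b\<le>k. c b \<in> {0, 1}"
  shows "real (Q k c (Suc N) (t + c k)) = fact N ^ k * r k c N t"
proof (induction N arbitrary: t)
  case 0 show ?case using Q_one[of c k t] c01 by simp
next
  case (Suc N)
  define X where "X = (case t + c k of 0 \<Rightarrow> 0 | Suc m' \<Rightarrow> Q k c (Suc N) m')"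
  define Y where "Y = Q k c (Suc N) (t + c k)"
  define rX where "rX = (case t of 0 \<Rightarrow> 0 | Suc t' \<Rightarrow> r k c N t')"
  define rY where "rY = r k c N t"
  have hX: "real X = fact N ^ k * rX"
  proof (cases t)
    case 0
    show ?thesis
    proof (cases "c k = 1")
      case True then show ?thesis using 0 Q_zero[of c k N, OF True] by (simp add: X_def rX_def del: Q.simps)
    next
      case False then have "c k = 0" using c01 by auto
      then show ?thesis using 0 by (simp add: X_def rX_def)
    qed
  next
    case (Suc t') then show ?thesis using Suc.IH[of t'] by (simp add: X_def rX_def)
  qed
  have hY: "real Y = fact N ^ k * rY" using Suc.IH[of t] by (simp add: Y_def rY_def)
  have N1: "real (Suc N) \<noteq> 0" by simp
  have "real (Q k c (Suc (Suc N)) (t + c k))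
      = (\<Sum>b\<le>k. real (k choose b) * real (Suc N) ^ (k - b) * (if c b = 1 then real X else real Y))"
    apply (subst Q.simps(2))
    unfolding of_nat_sum X_def Y_def
    by (rule sum.cong) auto
  also have "\<dots> = fact N ^ k * (\<Sum>b\<le>k. real (k choose b) * real (Suc N) ^ (k - b) * (real (c b) * rX + (1 - real (c b)) * rY))"
    unfolding sum_distrib_left
  proof (rule sum.cong[OF refl])
    fix b assume "b \<in> {..k}"
    then have "c b \<in> {0,1}" using c01 by auto
    then show "real (k choose b) * real (Suc N) ^ (k - b) * (if c b = 1 then real X else real Y) =
         fact N ^ k * (real (k choose b) * real (Suc N) ^ (k - b) * (real (c b) * rX + (1 - real (c b)) * rY))"
      using hX hY by auto
  qed
  also have "\<dots> = fact (Suc N) ^ k * (al k c (Suc N) * rY + be k c (Suc N) * rX)"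
  proof -
    have pt: "real (Suc N) ^ k * (real (k choose b) * (1 - real (c b)) / (real (Suc N + 1) - 1) ^ b) * rY +
          real (Suc N) ^ k * (real (k choose b) * (1 / real (Suc N) ^ b) * real (c b)) * rX =
          real (k choose b) * real (Suc N) ^ (k - b) * (real (c b) * rX + (1 - real (c b)) * rY)"
      if "b \<in> {..k}" for b
    proof -
      have pw: "real (Suc N) ^ k = real (Suc N) ^ (k - b) * real (Suc N) ^ b"
        using that by (simp add: power_add[symmetric])
      have pb: "real (Suc N) ^ b \<noteq> 0" by simp
      show ?thesis unfolding pw using pb by (simp add: field_simps)
    qed
    have e0: "real (Suc N) ^ k * (al k c (Suc N) * rY + be k c (Suc N) * rX)
       = (\<Sum>b\<le>k. real (Suc N) ^ k * (real (k choose b) * (1 - real (c b)) / (real (Suc N + 1) - 1) ^ b) * rY +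
          real (Suc N) ^ k * (real (k choose b) * (1 / real (Suc N) ^ b) * real (c b)) * rX)"
      by (simp add: al_def be_def F_def sum_distrib_left sum_distrib_right sum.distrib algebra_simps)
    have e: "real (Suc N) ^ k * (al k c (Suc N) * rY + be k c (Suc N) * rX)
       = (\<Sum>b\<le>k. real (k choose b) * real (Suc N) ^ (k - b) * (real (c b) * rX + (1 - real (c b)) * rY))"
      unfolding e0 using pt by (rule sum.cong[OF refl])
    have fs: "fact (Suc N) ^ k * (al k c (Suc N) * rY + be k c (Suc N) * rX) = (fact N ^ k :: real) * (real (Suc N) ^ k * (al k c (Suc N) * rY + be k c (Suc N) * rX))"
    proof -
      have "fact (Suc N) = (fact N :: real) * real (Suc N)" by (simp add: fact_Suc algebra_simps)
      then show ?thesis by (simp add: power_mult_distrib)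
    qed
    show ?thesis unfolding fs e ..
  qed
  finally show ?case by (simp add: rX_def rY_def)
qed


lemma bern:
  fixes x y :: real
  assumes "x \<ge> 0" "y \<ge> 0"
  shows "x ^ Suc n + real (Suc n) * y * x ^ n \<le> (x + y) ^ Suc n"
proof (induction n)
  case 0 then show ?case by simp
next
  case (Suc n)
  have "x ^ Suc (Suc n) + real (Suc (Suc n)) * y * x ^ Suc n
      \<le> (x + y) * (x ^ Suc n + real (Suc n) * y * x ^ n)"
    using assms by (simp add: algebra_simps)
  also have "\<dots> \<le> (x + y) * (x + y) ^ Suc n"
    using Suc assms by (intro mult_left_mono) auto
  finally show ?case by simp
qed

lemma alg_aux: "(f::real) > 0 \<Longrightarrow> s > 0 \<Longrightarrow> A/(s*f)*P + b*(B/f*P) = (A + s*b*B)/(s*f)*P"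
  by (simp add: field_simps)

lemma al_nonneg:
  assumes "\<forall>b\<le>k. c b \<in> {0, 1}"
  shows "al k c j \<ge> 0"
  unfolding al_def F_def using assms by (intro sum_nonneg) auto

lemma be_nonneg: "be k c j \<ge> 0"
  unfolding be_def by (intro sum_nonneg) auto

lemma al_mono:
  assumes "\<forall>b\<le>k. c b \<in> {0, 1}" "1 \<le> i" "i \<le> j"
  shows "al k c j \<le> al k c i"
  unfolding al_def F_def
proof (rule sum_mono)
  fix b assume "b \<in> {..k}"
  then have "1 - real (c b) \<ge> 0" using assms(1) by auto
  moreover have "(real j) ^ b \<ge> (real i) ^ b" using assms by (intro power_mono) auto
  moreover have "(real i) ^ b > 0" using assms by simp
  moreover have "(real j) ^ b > 0" using assms by simp
  ultimately have "real (k choose b) * (1 - real (c b)) / (real j) ^ b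
      \<le> real (k choose b) * (1 - real (c b)) / (real i) ^ b"
    by (intro divide_left_mono) auto
  then show "real (k choose b) * (1 - real (c b)) / (real (j + 1) - 1) ^ b
      \<le> real (k choose b) * (1 - real (c b)) / (real (i + 1) - 1) ^ b"
    by simp
qed

lemma r_zero: "t > N \<Longrightarrow> r k c N t = 0"
proof (induction N arbitrary: t)
  case 0 then show ?case by simp
next
  case (Suc N) then show ?case by (cases t) auto
qed

lemma r_bound:
  assumes c01: "\<forall>b\<le>k. c b \<in> {0, 1}"
  shows "t \<le> N \<Longrightarrow> r k c N t \<le> (\<Sum>j=1..N. be k c j) ^ t / fact t * (\<Prod>i=1..N-t. al k c i)"
proof (induction N arbitrary: t)
  case 0 then show ?case by simp
next
  case (Suc N)
  define H where "H = (\<Sum>j=1..N. be k c j)"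
  define P where "P = (\<lambda>s. \<Prod>i=1..s. al k c i)"
  have H0: "H \<ge> 0" unfolding H_def by (intro sum_nonneg be_nonneg)
  have P0: "P s \<ge> 0" for s unfolding P_def using al_nonneg[OF c01] by (intro prod_nonneg) auto
  have PS: "P (Suc s) = al k c (Suc s) * P s" for s unfolding P_def by (simp add: prod.cl_ivl_Suc)
  have HS: "(\<Sum>j=1..Suc N. be k c j) = H + be k c (Suc N)" unfolding H_def by simp
  have a0: "al k c (Suc N) \<ge> 0" using al_nonneg[OF c01] .
  have b0: "be k c (Suc N) \<ge> 0" by (rule be_nonneg)
  show ?case
  proof (cases t)
    case 0
    have "r k c (Suc N) t = al k c (Suc N) * r k c N 0" using 0 by simp
    also have "\<dots> \<le> al k c (Suc N) * P N"
      using Suc.IH[of 0] a0 by (intro mult_left_mono) (auto simp: P_def)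
    also have "\<dots> = P (Suc N)" by (simp add: PS)
    finally show ?thesis using 0 by (simp add: P_def)
  next
    case (Suc t')
    have t': "t' \<le> N" using Suc.prems Suc by simp
    have first: "al k c (Suc N) * r k c N t \<le> H ^ t / fact t * P (Suc N - t)"
    proof (cases "t \<le> N")
      case True
      have "al k c (Suc N) * r k c N t \<le> al k c (Suc N) * (H ^ t / fact t * P (N - t))"
        using Suc.IH[OF True] a0 by (intro mult_left_mono) (auto simp: H_def P_def)
      also have "\<dots> = H ^ t / fact t * (al k c (Suc N) * P (N - t))" by simp
      also have "\<dots> \<le> H ^ t / fact t * (al k c (Suc (N - t)) * P (N - t))"
        using al_mono[OF c01, of "Suc (N - t)" "Suc N"] P0 H0
        by (intro mult_left_mono mult_right_mono) auto
      also have "\<dots> = H ^ t / fact t * P (Suc N - t)"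
        using True by (simp add: PS Suc_diff_le)
      finally show ?thesis .
    next
      case False
      then have "r k c N t = 0" by (intro r_zero) simp
      then show ?thesis using H0 P0 by simp
    qed
    have second: "be k c (Suc N) * r k c N t' \<le> be k c (Suc N) * (H ^ t' / fact t' * P (Suc N - t))"
      using Suc.IH[OF t'] b0 Suc by (intro mult_left_mono) (auto simp: H_def P_def)
    have "r k c (Suc N) t = al k c (Suc N) * r k c N t + be k c (Suc N) * r k c N t'"
      using Suc by simp
    also have "\<dots> \<le> H ^ t / fact t * P (Suc N - t) + be k c (Suc N) * (H ^ t' / fact t' * P (Suc N - t))"
      using first second by linarith
    also have "\<dots> = (H ^ Suc t' + real (Suc t') * be k c (Suc N) * H ^ t') / fact (Suc t') * P (Suc N - t)"
    proof -
      have ft: "(fact (Suc t') :: real) = real (Suc t') * fact t'" by simp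
      have f0: "(fact t' :: real) \<noteq> 0" by simp
      have s0: "real (Suc t') \<noteq> 0" by simp
      have d: "(fact t' :: real) + fact t' * real t' \<noteq> 0"
        by (metis add_pos_nonneg fact_gt_zero less_irrefl mult_nonneg_nonneg of_nat_0_le_iff order_less_imp_le)
      show ?thesis unfolding ft Suc
        by (rule alg_aux) auto
    qed
    also have "\<dots> \<le> (H + be k c (Suc N)) ^ Suc t' / fact (Suc t') * P (Suc N - t)"
      using bern[OF H0 b0, of t'] P0 by (intro mult_right_mono divide_right_mono) auto
    finally show ?thesis using Suc HS by (simp add: P_def)
  qed
qed

lemma HC_be: "HC k c n = (\<Sum>j=1..n-1. be k c j)"
  unfolding HC_def be_def sum_distrib_left sum_distrib_right
  by (subst sum.swap) (simp add: algebra_simps)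

theorem theorem5p1:
  fixes k n m :: nat and c :: "nat \<Rightarrow> nat"
  assumes "k \<ge> 1" and "n \<ge> 2"
    and "\<forall>\<beta>\<le>k. c \<beta> \<in> {0, 1}"
    and "1 \<le> m" and "m \<le> n"
  shows "O_C_max k c n m \<ge> real (O_C k c n (m + c k - 1))"
proof -
  obtain N where N: "n = Suc N" using assms(2) by (cases n) auto
  obtain t where t: "m = Suc t" using assms(4) by (cases m) auto
  have tN: "t \<le> N" using assms(5) N t by simp
  have "real (O_C k c n (m + c k - 1)) = real (Q k c (Suc N) (t + c k))"
    using O_C_Q[OF assms(1)] N t by simp
  also have "\<dots> = fact N ^ k * r k c N t" by (rule Q_r[OF assms(3)])
  also have "\<dots> \<le> fact N ^ k * ((\<Sum>j=1..N. be k c j) ^ t / fact t * (\<Prod>i=1..N-t. al k c i))"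
    using r_bound[OF assms(3) tN] by (intro mult_left_mono) auto
  also have "\<dots> = O_C_max k c n m"
    unfolding O_C_max_def HC_be al_def N t by simp
  finally show ?thesis .
qed


end
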